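(* There exists a random coverage collaborative learning problem with strategy space $\Theta=\mathbb{R}_+^k$ whose set of stable equilibria is non-convex.
   Context: Random coverage: finite domain $\mathcal{X}$; agent $i$ has a distribution $(q_{ix})_{x\in\mathcal{X}}$ on $\mathcal{X}$. For integer sample counts ${\bf m}$, $U_i({\bf m})=1-\frac12\sum_{x\in\mathcal{X}}q_{ix}\prod_{j=1}^k(1-q_{jx})^{m_j}$; for real ${\boldsymbol\theta}\in\mathbb{R}_+^k$, $u_i({\boldsymbol\theta})=\mathbb{E}[U_i({\bf m})]$ where the $m_j$ are independent with $m_j=\lfloor\theta_j\rfloor+\mathrm{Bernoulli}(\theta_j-\lfloor\theta_j\rfloor)$. Each agent has a threshold $\mu_i$; ${\boldsymbol\theta}$ is feasible if $u_i({\boldsymbol\theta})\ge\mu_i$ for all $i$. A feasible ${\boldsymbol\theta}$ is a stable equilibrium if for no $i$ is there $0\le\theta_i'<\theta_i$ with $u_i(\theta_i',{\boldsymbol\theta}_{-i})\ge\mu_i$ (${\boldsymbol\theta}$ with $i$-th entry replaced by $\theta_i'$). *)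

theory Defs
  imports "HOL-Analysis.Analysis" "HOL-Library.FuncSet"
begin

(* Agents: 0..<k.
   q i x: probability of point x under agent i's distribution.
   Strategies theta :: nat => real, meaningful on 0..<k (zero elsewhere). *)

definition rc_dist :: "nat set \<Rightarrow> nat \<Rightarrow> (nat \<Rightarrow> nat \<Rightarrow> real) \<Rightarrow> bool" where
  "rc_dist X k q \<longleftrightarrow> finite X \<and>
     (\<forall>i<k. (\<forall>x\<in>X. q i x \<ge> 0) \<and> (\<Sum>x\<in>X. q i x) = 1)"

definition rc_U :: "nat set \<Rightarrow> nat \<Rightarrow> (nat \<Rightarrow> nat \<Rightarrow> real) \<Rightarrow> nat \<Rightarrow> (nat \<Rightarrow> nat) \<Rightarrow> real" where
  "rc_U X k q i m = 1 - (1/2) * (\<Sum>x\<in>X. q i x * (\<Prod>j<k. (1 - q j x) ^ (m j)))"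

(* u_i(theta) = E[U_i(m)], m_j = floor theta_j + Bernoulli(frac theta_j), independent;
   the expectation is written out as a finite sum over the 2^k outcomes b of the Bernoullis *)
definition rc_u :: "nat set \<Rightarrow> nat \<Rightarrow> (nat \<Rightarrow> nat \<Rightarrow> real) \<Rightarrow> nat \<Rightarrow> (nat \<Rightarrow> real) \<Rightarrow> real" where
  "rc_u X k q i \<theta> =
     (\<Sum>b\<in>PiE {..<k} (\<lambda>_. {0::nat, 1}).
        (\<Prod>j<k. if b j = 1 then frac (\<theta> j) else 1 - frac (\<theta> j))
        * rc_U X k q i (\<lambda>j. nat \<lfloor>\<theta> j\<rfloor> + b j))"

definition rc_strat :: "nat \<Rightarrow> (nat \<Rightarrow> real) set" where
  "rc_strat k = {\<theta>. (\<forall>j<k. \<theta> j \<ge> 0) \<and> (\<forall>j\<ge>k. \<theta> j = 0)}"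

definition rc_feasible :: "nat set \<Rightarrow> nat \<Rightarrow> (nat \<Rightarrow> nat \<Rightarrow> real) \<Rightarrow> (nat \<Rightarrow> real) \<Rightarrow> (nat \<Rightarrow> real) \<Rightarrow> bool" where
  "rc_feasible X k q \<mu> \<theta> \<longleftrightarrow> \<theta> \<in> rc_strat k \<and> (\<forall>i<k. rc_u X k q i \<theta> \<ge> \<mu> i)"

definition rc_stable :: "nat set \<Rightarrow> nat \<Rightarrow> (nat \<Rightarrow> nat \<Rightarrow> real) \<Rightarrow> (nat \<Rightarrow> real) \<Rightarrow> (nat \<Rightarrow> real) \<Rightarrow> bool" where
  "rc_stable X k q \<mu> \<theta> \<longleftrightarrow> rc_feasible X k q \<mu> \<theta> \<and>
     \<not> (\<exists>i<k. \<exists>t. 0 \<le> t \<and> t < \<theta> i \<and> rc_u X k q i (\<theta>(i := t)) \<ge> \<mu> i)"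

definition convex_strats :: "(nat \<Rightarrow> real) set \<Rightarrow> bool" where
  "convex_strats S \<longleftrightarrow> (\<forall>a\<in>S. \<forall>b\<in>S. \<forall>t::real. 0 \<le> t \<and> t \<le> 1 \<longrightarrow>
      (\<lambda>j. (1 - t) * a j + t * b j) \<in> S)"

end

theory Submission
  imports Defs
begin
lemma PiE2: "PiE {..<2::nat} (\<lambda>_. {0,1::nat}) = (\<lambda>(a,b). (\<lambda>j. if j = 0 then a else if j = 1 then b else undefined)) ` ({0,1}\<times>{0,1})"
proof (rule set_eqI, rule iffI)
  fix f assume f: "f \<in> PiE {..<2::nat} (\<lambda>_. {0,1::nat})"
  have feq: "f = (\<lambda>j. if j = 0 then f 0 else if j = 1 then f 1 else undefined)"
    using f by (auto simp: PiE_def extensional_def)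
  have mem: "(f 0, f 1) \<in> {0,1}\<times>{0,1}" using PiE_mem[OF f, of 0] PiE_mem[OF f, of 1] by auto
  show "f \<in> (\<lambda>(a,b). (\<lambda>j. if j = 0 then a else if j = 1 then b else undefined)) ` ({0,1}\<times>{0,1})"
    apply (rule image_eqI[where x="(f 0, f 1)"])
     apply (subst case_prod_conv, rule feq)
    apply (rule mem)
    done
next
  fix f :: "nat \<Rightarrow> nat" assume "f \<in> (\<lambda>(a,b). (\<lambda>j. if j = 0 then a else if j = 1 then b else undefined)) ` ({0,1::nat}\<times>{0,1::nat})"
  then show "f \<in> PiE {..<2::nat} (\<lambda>_. {0,1::nat})" by (auto simp: PiE_def extensional_def numeral_2_eq_2 less_Suc_eq)
qed

lemma inj2: "inj_on (\<lambda>(a,b). (\<lambda>j::nat. if j = 0 then a else if j = 1 then b else undefined)) ({0,1::nat}\<times>{0,1::nat})"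
proof (rule inj_onI)
  fix p r assume "p \<in> {0,1::nat}\<times>{0,1::nat}" "r \<in> {0,1::nat}\<times>{0,1::nat}"
    and e: "(\<lambda>(a,b). (\<lambda>j::nat. if j = 0 then a else if j = 1 then b else undefined)) p = (\<lambda>(a,b). (\<lambda>j::nat. if j = 0 then a else if j = 1 then b else undefined)) r"
  have "fst p = fst r" using fun_cong[OF e, of 0] by (simp add: split_beta)
  moreover have "snd p = snd r" using fun_cong[OF e, of 1] by (simp add: split_beta)
  ultimately show "p = r" by (simp add: prod_eq_iff)
qed

definition "qq = (\<lambda>(i::nat) (x::nat). 1::real)"

lemma u_formula: "rc_u {0} 2 qq i \<theta> =
  1 - 1/2 * ((1 - frac (\<theta> 0)) * (1 - frac (\<theta> 1)) * (0::real) ^ (nat \<lfloor>\<theta> 0\<rfloor>) * 0 ^ (nat \<lfloor>\<theta> 1\<rfloor>))"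
  unfolding rc_u_def PiE2
  apply (subst sum.reindex[OF inj2])
  apply (simp add: rc_U_def qq_def numeral_2_eq_2 algebra_simps)
  apply (simp add: field_simps)
  done
lemma stab01: "rc_stable {0} 2 qq (\<lambda>_. 1) (\<lambda>j. if j = 1 then 1 else 0)"
proof -
  let ?th = "\<lambda>j::nat. if j = 1 then 1 else (0::real)"
  have feas: "rc_feasible {0} 2 qq (\<lambda>_. 1) ?th"
    unfolding rc_feasible_def rc_strat_def by (simp add: u_formula)
  have "\<not> (rc_u {0} 2 qq i (?th(i := t)) \<ge> 1)" if "i < 2" "0 \<le> t" "t < ?th i" for i t
  proof -
    have i1: "i = 1" using that by (auto split: if_splits)
    have "frac t = t" using that i1 by (simp add: frac_eq)
    moreover have "\<lfloor>t\<rfloor> = 0" using that i1 by (simp add: floor_eq_iff)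
    ultimately show ?thesis using i1 that by (simp add: u_formula)
  qed
  then show ?thesis using feas unfolding rc_stable_def by auto
qed

lemma stab10: "rc_stable {0} 2 qq (\<lambda>_. 1) (\<lambda>j. if j = 0 then 1 else 0)"
proof -
  let ?th = "\<lambda>j::nat. if j = 0 then 1 else (0::real)"
  have feas: "rc_feasible {0} 2 qq (\<lambda>_. 1) ?th"
    unfolding rc_feasible_def rc_strat_def by (simp add: u_formula)
  have "\<not> (rc_u {0} 2 qq i (?th(i := t)) \<ge> 1)" if "i < 2" "0 \<le> t" "t < ?th i" for i t
  proof -
    have i1: "i = 0" using that by (auto split: if_splits)
    have "frac t = t" using that i1 by (simp add: frac_eq)
    moreover have "\<lfloor>t\<rfloor> = 0" using that i1 by (simp add: floor_eq_iff)
    ultimately show ?thesis using i1 that by (simp add: u_formula)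
  qed
  then show ?thesis using feas unfolding rc_stable_def by auto
qed

theorem theorem8:
  shows "\<exists>(X::nat set) (k::nat) (q::nat \<Rightarrow> nat \<Rightarrow> real) (\<mu>::nat \<Rightarrow> real).
           rc_dist X k q \<and> \<not> convex_strats {\<theta>. rc_stable X k q \<mu> \<theta>}"
proof (intro exI conjI)
  show "rc_dist {0} 2 qq" by (simp add: rc_dist_def qq_def)
  let ?m = "\<lambda>j::nat. (1 - 1/2) * (if j = 0 then 1 else 0) + 1/2 * (if j = 1 then 1 else (0::real))"
  have "frac (1/2::real) = 1/2" by (simp add: frac_eq)
  moreover have "\<lfloor>1/2::real\<rfloor> = 0" by (simp add: floor_eq_iff)
  ultimately have "rc_u {0} 2 qq 0 ?m = 7/8" by (simp add: u_formula)
  then have nf: "\<not> rc_u {0} 2 qq 0 ?m \<ge> 1" by simp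
  have "\<not> rc_stable {0} 2 qq (\<lambda>_. 1) ?m"
  proof
    assume "rc_stable {0} 2 qq (\<lambda>_. 1) ?m"
    then have all: "\<forall>i<2. rc_u {0} 2 qq i ?m \<ge> 1" unfolding rc_stable_def rc_feasible_def by blast
    have "rc_u {0} 2 qq 0 ?m \<ge> 1" by (rule all[rule_format]) simp
    then show False using nf by blast
  qed
  show "\<not> convex_strats {\<theta>. rc_stable {0} 2 qq (\<lambda>_. 1) \<theta>}"
  proof
    assume c: "convex_strats {\<theta>. rc_stable {0} 2 qq (\<lambda>_. 1) \<theta>}"
    have "?m \<in> {\<theta>. rc_stable {0} 2 qq (\<lambda>_. 1) \<theta>}"
      by (rule c[unfolded convex_strats_def, rule_format]) (use stab01 stab10 in auto)
    then show False using \<open>\<not> rc_stable {0} 2 qq (\<lambda>_. 1) ?m\<close> by simp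
  qed
qed
end
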